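(* Let $N\geq 3$ and let $V:\mathbb{R}^N\to\mathbb{R}$ be a H\"older continuous function satisfying: (a) $V\in L^\infty(\mathbb{R}^N)$, and $V^+=V_1+V_2$ with $V^+\not\equiv 0$, $V_1\in L^{N/2}(\mathbb{R}^N)$ and $\lim_{|x|\to\infty}|x|^2V_2(x)=0$; (b) there exist $A,\alpha>0$ such that $V^+(x)\leq A|x|^{-2-\alpha}$ for all $x\in\mathbb{R}^N$; (c) $\lim_{x\to 0}|x|^{2(N-1)/N}V_2(x)=0$. Then $\Lambda>0$, where $\Lambda$ is defined below.
   Context: $V^+(x)=\max\{V(x),0\}$, $V^-(x)=\max\{-V(x),0\}$. $B_R=\{x\in\mathbb{R}^N: |x|<R\}$. For $R>0$, $$\lambda_1(R)=\min\left\{\int_{B_R}|\nabla u|^2dx:\ u\in H^1_0(B_R),\ \int_{B_R}V(x)u^2dx=1\right\}.$$ The map $R\mapsto\lambda_1(R)$ is decreasing, and $\Lambda:=\lim_{R\to\infty}\lambda_1(R)\geq 0$. *)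

theory Defs
  imports "HOL-Analysis.Analysis"
begin

text \<open>H^1_0(B_R) is the closure
  of these in the H^1 norm, so the Rayleigh infimum over them equals lambda_1(R).\<close>
definition test_fun :: "real \<Rightarrow> ('a::euclidean_space \<Rightarrow> real) \<Rightarrow> ('a \<Rightarrow> 'a) \<Rightarrow> bool" where
  "test_fun R u g \<longleftrightarrow>
     (\<forall>x. (u has_derivative (\<lambda>h. g x \<bullet> h)) (at x)) \<and> continuous_on UNIV g \<and>
     compact (closure {x. u x \<noteq> 0}) \<and> closure {x. u x \<noteq> 0} \<subseteq> ball 0 R"

text \<open>lambda_1(R), as an extended real (infimum of the empty set is +infinity).\<close>
definition lambda1 :: "('a::euclidean_space \<Rightarrow> real) \<Rightarrow> real \<Rightarrow> ereal" where
  "lambda1 V R = Inf {ereal (LINT x|lborel. (norm (g x))\<^sup>2) | u g.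
        test_fun R u g \<and> (LINT x|lborel. V x * (u x)\<^sup>2) = 1}"

definition Lambda :: "('a::euclidean_space \<Rightarrow> real) \<Rightarrow> ereal" where
  "Lambda V = Lim at_top (\<lambda>R. lambda1 V R)"

end

theory Submission
  imports Defs
begin

lemma supp_zero:
  assumes "test_fun R u g" "norm x \<ge> R"
  shows "u x = 0 \<and> g x = 0"
proof -
  define C where "C = closure {x. u x \<noteq> 0}"
  have sub: "C \<subseteq> ball 0 R" using assms(1) unfolding test_fun_def C_def by blast
  have xn: "x \<notin> C" using sub assms(2) by (auto simp: subset_iff)
  have cs: "{x. u x \<noteq> 0} \<subseteq> C" unfolding C_def by (rule closure_subset)
  have ux: "u x = 0" using xn cs by blast
  have d: "(u has_derivative (\<lambda>h. g x \<bullet> h)) (at x)" using assms(1) unfolding test_fun_def by blast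
  have z: "((\<lambda>y. 0::real) has_derivative (\<lambda>h. 0)) (at x)" by simp
  have "(u has_derivative (\<lambda>h. 0)) (at x)"
  proof (rule has_derivative_transform_within_open[OF z, where s="- C"])
    show "open (- C)" unfolding C_def by auto
    show "x \<in> - C" using xn by simp
    fix y assume yC: "y \<in> - C" show "0 = u y"
    proof (rule ccontr)
      assume "0 \<noteq> u y"
      then have "y \<in> {x. u x \<noteq> 0}" by simp
      from subsetD[OF cs this] yC show False by simp
    qed
  qed
  then have "(\<lambda>h. g x \<bullet> h) = (\<lambda>h. 0)" using has_derivative_unique d by blast
  then have "g x \<bullet> g x = 0" by meson
  then show ?thesis using ux by simp
qed

lemma u_cont: "test_fun R u g \<Longrightarrow> continuous_on UNIV u"
  unfolding test_fun_def
  by (meson continuous_at_imp_continuous_on has_derivative_continuous)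

lemma L_int:
  fixes f :: "'a::euclidean_space \<Rightarrow> real"
  assumes c: "continuous_on UNIV f" and z: "\<And>x. norm x \<ge> r \<Longrightarrow> f x = 0"
  shows "integrable lborel f" "f integrable_on UNIV" "integral\<^sup>L lborel f = integral UNIV f"
    "cball 0 r \<subseteq> cbox a b \<Longrightarrow> integral (cbox a b) f = integral UNIV f"
proof -
  have "integrable lborel (\<lambda>x. indicator (cball 0 r) x *\<^sub>R f x)"
    by (rule borel_integrable_compact) (auto intro: continuous_on_subset[OF c])
  moreover have "(\<lambda>x. indicator (cball 0 r) x *\<^sub>R f x) = f"
  proof
    fix x show "indicator (cball 0 r) x *\<^sub>R f x = f x"
      using z[of x] by (cases "x \<in> cball 0 r") auto
  qed
  ultimately show i: "integrable lborel f" by simp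
  show "f integrable_on UNIV" using integrable_on_lborel[OF i] .
  show "integral\<^sup>L lborel f = integral UNIV f" using integral_lborel[OF i] by simp
  assume s: "cball 0 r \<subseteq> cbox a b"
  have "(\<lambda>x. if x \<in> cbox a b then f x else 0) = f"
  proof
    fix x show "(if x \<in> cbox a b then f x else 0) = f x"
      proof (cases "x \<in> cbox a b")
      case False
      then have "x \<notin> cball 0 r" using s by blast
      then show ?thesis using False z[of x] by simp
    qed simp
  qed
  then show "integral (cbox a b) f = integral UNIV f" using integral_restrict_UNIV[of "cbox a b" f] by simp
qed

definition psi :: "('a::euclidean_space \<Rightarrow> real) \<Rightarrow> 'a \<Rightarrow> real" where
  "psi u x = (u x)^2 / (x \<bullet> x + 1)"

definition Dpsi :: "('a::euclidean_space \<Rightarrow> real) \<Rightarrow> ('a \<Rightarrow> 'a) \<Rightarrow> 'a \<Rightarrow> 'a \<Rightarrow> real" where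
  "Dpsi u g y v = 2 * u y * (g y \<bullet> v) / (y \<bullet> y + 1) - (u y)^2 * (2 * (y \<bullet> v)) / (y \<bullet> y + 1)^2"

lemma psi_deriv:
  assumes d: "(u has_derivative (\<lambda>h. g y \<bullet> h)) (at y)"
  shows "(psi u has_derivative Dpsi u g y) (at y)"
proof -
  have pos: "y \<bullet> y + 1 \<noteq> 0" by (metis add_nonneg_pos inner_ge_zero less_numeral_extra(1) not_less_iff_gr_or_eq)
  have d2: "((\<lambda>x. (u x)^2) has_derivative (\<lambda>h. 2 * u y * (g y \<bullet> h))) (at y)"
    using has_derivative_power[OF d, of 2] by (simp add: algebra_simps)
  have d3: "((\<lambda>x. x \<bullet> x + 1) has_derivative (\<lambda>h. 2 * (y \<bullet> h))) (at y)"
  proof -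
    have "((\<lambda>x. x \<bullet> x + 1) has_derivative (\<lambda>h. y \<bullet> h + h \<bullet> y + 0)) (at y)"
      by (intro has_derivative_add has_derivative_inner has_derivative_ident has_derivative_const)
    then show ?thesis by (simp add: inner_commute)
  qed
  have "((\<lambda>x. (u x)^2 / (x \<bullet> x + 1)) has_derivative
     (\<lambda>h. - ((u y)^2 * (inverse (y \<bullet> y + 1) * (2 * (y \<bullet> h)) * inverse (y \<bullet> y + 1))) + 2 * u y * (g y \<bullet> h) / (y \<bullet> y + 1))) (at y)"
    using has_derivative_divide[OF d2 d3 pos] by simp
  moreover have "(\<lambda>h. - ((u y)^2 * (inverse (y \<bullet> y + 1) * (2 * (y \<bullet> h)) * inverse (y \<bullet> y + 1))) + 2 * u y * (g y \<bullet> h) / (y \<bullet> y + 1)) = Dpsi u g y"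
    unfolding Dpsi_def by (rule ext) (simp add: field_simps power2_eq_square)
  ultimately show ?thesis unfolding psi_def[abs_def] by simp
qed

lemma nz1: "(y::'a::euclidean_space) \<bullet> y + 1 \<noteq> 0"
  by (metis add_nonneg_pos inner_ge_zero less_numeral_extra(1) not_less_iff_gr_or_eq)

lemma Dpsi_lin: "Dpsi u g y (s *\<^sub>R x) = s * Dpsi u g y x"
  unfolding Dpsi_def by (simp add: inner_scaleR_right field_simps)

lemma scaling_identity:
  fixes u :: "'a::euclidean_space \<Rightarrow> real"
  assumes tf: "test_fun R u g"
  shows "integral UNIV (\<lambda>x. Dpsi u g x x) = - real DIM('a) * integral UNIV (psi u)"
proof -
  define r where "r = max R 1"
  have r1: "r \<ge> 1" and rR: "R \<le> r" unfolding r_def by auto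
  have sz: "norm x \<ge> r \<Longrightarrow> u x = 0 \<and> g x = 0" for x
    using supp_zero[OF tf, of x] rR by simp
  have ud: "\<And>x. (u has_derivative (\<lambda>h. g x \<bullet> h)) (at x)" using tf unfolding test_fun_def by blast
  have ucont: "continuous_on UNIV u" by (rule u_cont[OF tf])
  have gcont: "continuous_on UNIV g" using tf unfolding test_fun_def by blast
  have uc[continuous_intros]: "continuous_on S h \<Longrightarrow> continuous_on S (\<lambda>p. u (h p))" for S and h :: "'b::topological_space \<Rightarrow> 'a"
    using continuous_on_compose2[OF ucont] by blast
  have gc[continuous_intros]: "continuous_on S h \<Longrightarrow> continuous_on S (\<lambda>p. g (h p))" for S and h :: "'b::topological_space \<Rightarrow> 'a"
    using continuous_on_compose2[OF gcont] by blast
  have nz2: "\<And>y::'a. (y \<bullet> y + 1)^2 \<noteq> 0" using nz1 by simp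
  have psic: "continuous_on S (\<lambda>p. psi u (h p))" if "continuous_on S h" for S and h :: "'b::topological_space \<Rightarrow> 'a"
    unfolding psi_def using that by (intro continuous_intros) (auto simp: nz1)
  have Dc: "continuous_on UNIV (\<lambda>p::real\<times>'a. Dpsi u g (fst p *\<^sub>R snd p) (snd p))"
    unfolding Dpsi_def by (intro continuous_intros) (use nz1 nz2 in blast)+
  obtain a where aB: "cball (0::'a) (2*r) \<subseteq> cbox (-a) a"
    using bounded_subset_cbox_symmetric[of "cball (0::'a) (2*r)"] by auto
  define B where "B = cbox (-a) a"
  define U where "U = {1/2..2::real}"
  define I where "I = integral UNIV (psi u)"
  define F where "F t = integral B (\<lambda>x. psi u (t *\<^sub>R x))" for t
  define G where "G t = I / t ^ DIM('a)" for t
  have psi0: "norm x \<ge> r \<Longrightarrow> psi u x = 0" for x using sz[of x] unfolding psi_def by simp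
  have psicont: "continuous_on UNIV (psi u)" using psic[of UNIV "\<lambda>x. x"] by (simp add: continuous_on_id)
  have FG: "F t = G t" if t: "t \<in> U" for t
  proof -
    have t0: "t > 0" "t \<ge> 1/2" using t unfolding U_def by auto
    have ftc: "continuous_on UNIV (\<lambda>x. psi u (t *\<^sub>R x))" by (intro psic continuous_intros)
    have ft0: "psi u (t *\<^sub>R x) = 0" if "norm x \<ge> r / t" for x
    proof -
      have "norm (t *\<^sub>R x) \<ge> r" using that t0 by (simp add: field_simps)
      then show ?thesis by (rule psi0)
    qed
    have sub1: "cball 0 (r/t) \<subseteq> B"
    proof -
      have "r / t \<le> 2 * r" using t0 r1 by (simp add: field_simps)
      then show ?thesis using aB unfolding B_def by (meson cball_subset_cball_iff order.trans order_refl)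
    qed
    have sub2: "cball 0 (r/t) \<subseteq> cbox ((-a - 0) /\<^sub>R t) ((a - 0) /\<^sub>R t)"
    proof
      fix x :: 'a assume "x \<in> cball 0 (r/t)"
      then have "norm (t *\<^sub>R x) \<le> r" using t0 by (simp add: field_simps)
      then have "t *\<^sub>R x \<in> cbox (-a) a" using aB r1 by (auto simp: subset_iff)
      then have "\<forall>i\<in>Basis. -(a \<bullet> i) \<le> t * (x \<bullet> i) \<and> t * (x \<bullet> i) \<le> a \<bullet> i"
        by (simp add: mem_box inner_scaleR_left)
      then show "x \<in> cbox ((-a - 0) /\<^sub>R t) ((a - 0) /\<^sub>R t)"
        using t0 by (auto simp: mem_box field_simps)
    qed
    have Iint: "(psi u has_integral I) B"
    proof -
      have "integral B (psi u) = I" unfolding I_def B_def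
        by (rule L_int(4)[OF psicont psi0]) (use aB r1 in auto)
      moreover have "psi u integrable_on B" unfolding B_def
        by (rule integrable_continuous, rule continuous_on_subset[OF psicont], rule subset_UNIV)
      ultimately show ?thesis by (simp add: has_integral_integral)
    qed
    have "((\<lambda>x. psi u (t *\<^sub>R x + 0)) has_integral (I /\<^sub>R t ^ DIM('a))) (cbox ((-a - 0) /\<^sub>R t) ((a - 0) /\<^sub>R t))"
      using has_integral_affinity'[OF Iint[unfolded B_def] t0(1), of 0] by simp
    then have "integral (cbox ((-a - 0) /\<^sub>R t) ((a - 0) /\<^sub>R t)) (\<lambda>x. psi u (t *\<^sub>R x)) = I / t ^ DIM('a)"
      by (simp add: integral_unique divide_inverse_commute)
    moreover have "integral (cbox ((-a - 0) /\<^sub>R t) ((a - 0) /\<^sub>R t)) (\<lambda>x. psi u (t *\<^sub>R x)) = integral UNIV (\<lambda>x. psi u (t *\<^sub>R x))"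
      by (rule L_int(4)[OF ftc ft0 sub2])
    moreover have "F t = integral UNIV (\<lambda>x. psi u (t *\<^sub>R x))"
      unfolding F_def B_def by (rule L_int(4)[OF ftc ft0 sub1[unfolded B_def]])
    ultimately show ?thesis unfolding G_def by simp
  qed
  have U1: "(1::real) \<in> U" "convex U" unfolding U_def by (auto simp: convex_real_interval)
  have Fd: "(F has_field_derivative integral (cbox (-a) a) (\<lambda>x. Dpsi u g (1 *\<^sub>R x) x)) (at 1 within U)"
    unfolding F_def B_def
  proof (rule leibniz_rule_field_derivative[where fx="\<lambda>t x. Dpsi u g (t *\<^sub>R x) x"])
    fix t x assume "t \<in> U" "x \<in> cbox (-a) a"
    have l: "((\<lambda>t. t *\<^sub>R x) has_derivative (\<lambda>s. s *\<^sub>R x)) (at t within U)"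
      by (intro derivative_eq_intros) auto
    have "((\<lambda>t. psi u (t *\<^sub>R x)) has_derivative (\<lambda>s. Dpsi u g (t *\<^sub>R x) (s *\<^sub>R x))) (at t within U)"
      by (rule has_derivative_compose[OF l psi_deriv[where u=u and g=g and y="t *\<^sub>R x", OF ud]])
    then show "((\<lambda>t. psi u (t *\<^sub>R x)) has_field_derivative Dpsi u g (t *\<^sub>R x) x) (at t within U)"
      unfolding has_field_derivative_def Dpsi_lin
      by (rule has_derivative_eq_rhs) (auto simp: mult.commute)
  next
    fix t assume "t \<in> U"
    have "continuous_on UNIV (\<lambda>x. psi u (t *\<^sub>R x))" by (intro psic continuous_intros)
    then show "(\<lambda>x. psi u (t *\<^sub>R x)) integrable_on cbox (-a) a"
      by (rule integrable_continuous[OF continuous_on_subset], simp)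
  next
    show "continuous_on (U \<times> cbox (-a) a) (\<lambda>(t, x). Dpsi u g (t *\<^sub>R x) x)"
      using continuous_on_subset[OF Dc, of "U \<times> cbox (-a) a"] by (simp add: case_prod_beta)
  qed (use U1 in auto)
  have Gd: "(G has_field_derivative (- real DIM('a) * I)) (at 1)"
  proof -
    have "(G has_field_derivative (- (I * (real DIM('a) * 1 ^ (DIM('a) - 1)) / (1 ^ DIM('a) * 1 ^ DIM('a))))) (at 1)"
      unfolding G_def[abs_def]
      by (rule derivative_eq_intros refl | simp)+
    then show ?thesis by (simp add: mult.commute)
  qed
  have int1: "interior U = {1/2<..<2}" unfolding U_def by simp
  have atU: "at (1::real) within U = at 1" by (rule at_within_interior) (simp add: int1)
  have "(G has_field_derivative integral (cbox (-a) a) (\<lambda>x. Dpsi u g (1 *\<^sub>R x) x)) (at 1 within U)"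
    by (rule has_field_derivative_transform_within[OF Fd zero_less_one U1(1)]) (rule FG[unfolded B_def])
  then have "integral (cbox (-a) a) (\<lambda>x. Dpsi u g (1 *\<^sub>R x) x) = - real DIM('a) * I"
    using Gd unfolding atU by (rule DERIV_unique)
  moreover have "integral (cbox (-a) a) (\<lambda>x. Dpsi u g x x) = integral UNIV (\<lambda>x. Dpsi u g x x)"
  proof -
    have c: "continuous_on UNIV (\<lambda>x. Dpsi u g x x)"
      unfolding Dpsi_def by (intro continuous_intros) (use nz1 nz2 in blast)+
    show ?thesis
      by (rule L_int(4)[OF c, of r]) (use sz aB r1 in \<open>auto simp: Dpsi_def\<close>)
  qed
  ultimately show ?thesis unfolding I_def by simp
qed

lemma ineq_aux:
  fixes U G X p :: real
  assumes p: "\<bar>p\<bar> \<le> G*X" and X: "X \<ge> 0" and G: "G \<ge> 0"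
  shows "2*U^2*X^2/(X^2+1)^2 - 2*U*p/(X^2+1) \<le> 5/2*U^2/(X^2+1) + 2*G^2"
proof -
  define d where "d = X^2 + 1"
  have d: "d > 0" unfolding d_def by (simp add: add_nonneg_pos)
  define w where "w = U / d"
  have U: "U = w * d" using d unfolding w_def by simp
  have L: "2*U^2*X^2/(X^2+1)^2 - 2*U*p/(X^2+1) = 2*w^2*X^2 - 2*w*p"
    unfolding d_def[symmetric] U using d by (simp add: field_simps power2_eq_square)
  have R: "5/2*U^2/(X^2+1) + 2*G^2 = 5/2*w^2*X^2 + 5/2*w^2 + 2*G^2"
    unfolding d_def[symmetric] U using d by (simp add: field_simps power2_eq_square d_def)
  have a: "- (w*p) \<le> \<bar>w\<bar> * (G*X)"
    by (metis abs_ge_minus_self abs_mult dual_order.trans mult_left_mono abs_ge_zero p)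
  have b: "0 \<le> (\<bar>w\<bar>*X - 2*G)^2" by simp
  have c: "(\<bar>w\<bar>*X - 2*G)^2 = w^2*X^2 - 4*(\<bar>w\<bar>*(G*X)) + 4*G^2"
    by (simp add: power2_eq_square algebra_simps)
  have e: "2*(\<bar>w\<bar>*(G*X)) \<le> 1/2*(w^2*X^2) + 2*G^2" using b c by linarith
  have f: "w^2 \<ge> 0" "w^2*X^2 \<ge> 0" by simp_all
  have "2*w^2*X^2 - 2*w*p \<le> 5/2*w^2*X^2 + 5/2*w^2 + 2*G^2"
    using a e f by linarith
  then show ?thesis using L R by simp
qed

lemma hardy:
  fixes u :: "'a::euclidean_space \<Rightarrow> real"
  assumes tf: "test_fun R u g" and dim: "DIM('a) \<ge> 3"
  shows "(LINT x|lborel. psi u x) \<le> 4 * (LINT x|lborel. (norm (g x))\<^sup>2)"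
proof -
  define r where "r = max R 1"
  have rR: "R \<le> r" unfolding r_def by auto
  have sz: "norm x \<ge> r \<Longrightarrow> u x = 0 \<and> g x = 0" for x
    using supp_zero[OF tf, of x] rR by simp
  have ucont: "continuous_on UNIV u" by (rule u_cont[OF tf])
  have gcont: "continuous_on UNIV g" using tf unfolding test_fun_def by blast
  have nz2: "\<And>y::'a. (y \<bullet> y + 1)^2 \<noteq> 0" using nz1 by simp
  have c1: "continuous_on UNIV (psi u)" unfolding psi_def
    by (intro continuous_intros ucont) (use nz1 in blast)
  have c2: "continuous_on UNIV (\<lambda>x. Dpsi u g x x)" unfolding Dpsi_def
    by (intro continuous_intros ucont gcont) (use nz1 nz2 in blast)+
  have c3: "continuous_on UNIV (\<lambda>x. (norm (g x))\<^sup>2)"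
    by (intro continuous_intros gcont)
  have z1: "norm x \<ge> r \<Longrightarrow> psi u x = 0" for x using sz[of x] by (simp add: psi_def)
  have z2: "norm x \<ge> r \<Longrightarrow> Dpsi u g x x = 0" for x using sz[of x] by (simp add: Dpsi_def)
  have z3: "norm x \<ge> r \<Longrightarrow> (norm (g x))\<^sup>2 = 0" for x using sz[of x] by simp
  note i1 = L_int[where r=r, OF c1 z1] and i2 = L_int[where r=r, OF c2 z2] and i3 = L_int[where r=r, OF c3 z3]
  define I where "I = (LINT x|lborel. psi u x)"
  define J where "J = (LINT x|lborel. (norm (g x))\<^sup>2)"
  have DI: "(LINT x|lborel. Dpsi u g x x) = - real DIM('a) * I"
    unfolding I_def using scaling_identity[OF tf] i1(3) i2(3) by simp
  have pw: "- Dpsi u g x x \<le> 5/2 * psi u x + 2 * (norm (g x))\<^sup>2" for x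
  proof -
    have "\<bar>g x \<bullet> x\<bar> \<le> norm (g x) * norm x" by (rule Cauchy_Schwarz_ineq2)
    from ineq_aux[OF this norm_ge_zero norm_ge_zero, of "u x"]
    show ?thesis unfolding Dpsi_def psi_def by (simp add: power2_norm_eq_inner[symmetric] algebra_simps)
  qed
  have "(LINT x|lborel. - Dpsi u g x x) \<le> (LINT x|lborel. 5/2 * psi u x + 2 * (norm (g x))\<^sup>2)"
    by (rule integral_mono) (use i1(1) i2(1) i3(1) pw in auto)
  then have "real DIM('a) * I \<le> 5/2 * I + 2 * J"
    using DI i1(1) i3(1) by (simp add: I_def J_def)
  moreover have "I \<ge> 0" unfolding I_def
    by (rule integral_nonneg_AE) (auto simp: psi_def nz1 add_nonneg_pos intro!: divide_nonneg_pos)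
  moreover have "real DIM('a) \<ge> 3" using dim by simp
  ultimately have "I \<le> 4 * J"
  proof -
    assume h: "real DIM('a) * I \<le> 5/2 * I + 2 * J" "I \<ge> 0" "real DIM('a) \<ge> 3"
    have "3 * I \<le> real DIM('a) * I" using mult_right_mono[OF h(3) h(2)] .
    then show ?thesis using h by linarith
  qed
  then show ?thesis unfolding I_def J_def .
qed

lemma psi_integrable:
  fixes u :: "'a::euclidean_space \<Rightarrow> real"
  assumes tf: "test_fun R u g"
  shows "integrable lborel (psi u)"
proof -
  define r where "r = max R 1"
  have rR: "R \<le> r" unfolding r_def by auto
  have sz: "norm x \<ge> r \<Longrightarrow> u x = 0 \<and> g x = 0" for x
    using supp_zero[OF tf, of x] rR by simp
  have ucont: "continuous_on UNIV u" by (rule u_cont[OF tf])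
  have c1: "continuous_on UNIV (psi u)" unfolding psi_def
    by (intro continuous_intros ucont) (use nz1 in blast)
  have z1: "norm x \<ge> r \<Longrightarrow> psi u x = 0" for x using sz[of x] by (simp add: psi_def)
  show ?thesis using L_int(1)[where r=r, OF c1 z1] .
qed

lemma Vbound:
  fixes V :: "'a::euclidean_space \<Rightarrow> real"
  assumes Vbdd: "\<exists>M. \<forall>x. \<bar>V x\<bar> \<le> M"
    and decay: "\<exists>A \<alpha>. A > 0 \<and> \<alpha> > 0 \<and> (\<forall>x. x \<noteq> 0 \<longrightarrow> max (V x) 0 \<le> A * norm x powr (-2 - \<alpha>))"
  shows "\<exists>K>0. \<forall>x. max (V x) 0 \<le> K / (x \<bullet> x + 1)"
proof -
  obtain M where M: "\<And>x. \<bar>V x\<bar> \<le> M" using Vbdd by blast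
  obtain A \<alpha> where A: "A > 0" "\<alpha> > 0" "\<And>x. x \<noteq> 0 \<Longrightarrow> max (V x) 0 \<le> A * norm x powr (-2 - \<alpha>)"
    using decay by blast
  have M0: "M \<ge> 0" using M[of 0] by linarith
  define K where "K = 2*M + 2*A + 1"
  have K0: "K > 0" unfolding K_def using M0 A by linarith
  have "max (V x) 0 \<le> K / (x \<bullet> x + 1)" for x
  proof -
    have xx: "x \<bullet> x = (norm x)^2" by (simp add: power2_norm_eq_inner)
    have d0: "x \<bullet> x + 1 > 0" by (simp add: add_nonneg_pos)
    show ?thesis
    proof (cases "norm x \<le> 1")
      case True
      have "x \<bullet> x + 1 \<le> 2" unfolding xx using True
        by (metis add_mono_thms_linordered_semiring(3) norm_ge_zero one_add_one power_le_one)
      have "max (V x) 0 \<le> M" using M[of x] M0 by linarith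
      also have "M \<le> 2*M / (x \<bullet> x + 1)"
        using \<open>x \<bullet> x + 1 \<le> 2\<close> d0 M0 by (simp add: field_simps mult_left_le)
      also have "2*M / (x \<bullet> x + 1) \<le> K / (x \<bullet> x + 1)"
        using d0 A M0 unfolding K_def by (simp add: divide_right_mono)
      finally show ?thesis .
    next
      case False
      then have n1: "norm x \<ge> 1" and x0: "x \<noteq> 0" by auto
      have "max (V x) 0 \<le> A * norm x powr (-2 - \<alpha>)" using A(3)[OF x0] .
      also have "norm x powr (-2 - \<alpha>) \<le> norm x powr (-2)"
        by (rule powr_mono) (use n1 A in auto)
      also have "norm x powr (-2) = 1 / (norm x)^2"
        using n1 by (simp add: powr_minus powr_numeral divide_inverse)
      finally have a: "max (V x) 0 \<le> A * (1 / (norm x)^2)" using A by (simp add: mult_left_mono)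
      have n2: "(norm x)^2 \<ge> 1" using n1 by (simp add: one_le_power)
      have "A * (1 / (norm x)^2) \<le> 2*A / (x \<bullet> x + 1)"
      proof -
        have gen: "A * (1/q) \<le> 2*A/(q+1)" if q: "q \<ge> 1" for q :: real
        proof -
          have "A * 1 \<le> A * q" using q A by (intro mult_left_mono) auto
          then have "A * (q + 1) \<le> (2*A) * q" by (simp add: algebra_simps)
          then show ?thesis using q by (simp add: divide_simps)
        qed
        show ?thesis unfolding xx using gen[OF n2] .
      qed
      also have "2*A / (x \<bullet> x + 1) \<le> K / (x \<bullet> x + 1)"
        using d0 A M0 unfolding K_def by (simp add: divide_right_mono)
      finally show ?thesis using a by linarith
    qed
  qed
  then show ?thesis using K0 by blast
qed

lemma lambda1_lower:
  fixes V :: "'a::euclidean_space \<Rightarrow> real"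
  assumes dim: "DIM('a) \<ge> 3" and K: "K > 0" and VK: "\<And>x. max (V x) 0 \<le> K / (x \<bullet> x + 1)"
  shows "ereal (1 / (4*K)) \<le> lambda1 V R"
  unfolding lambda1_def
proof (rule Inf_greatest, clarify)
  fix u g assume tf: "test_fun R u g" and one: "(LINT x|lborel. V x * (u x)\<^sup>2) = 1"
  have iV: "integrable lborel (\<lambda>x. V x * (u x)\<^sup>2)"
    proof (rule ccontr)
    assume "\<not> integrable lborel (\<lambda>x. V x * (u x)\<^sup>2)"
    from not_integrable_integral_eq[OF this] one show False by simp
  qed
  have ip: "integrable lborel (\<lambda>x. K * psi u x)" using psi_integrable[OF tf] by simp
  have pw: "V x * (u x)\<^sup>2 \<le> K * psi u x" for x
  proof -
    have "V x * (u x)\<^sup>2 \<le> max (V x) 0 * (u x)\<^sup>2" by (intro mult_right_mono) auto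
    also have "\<dots> \<le> K / (x \<bullet> x + 1) * (u x)\<^sup>2" by (intro mult_right_mono VK) auto
    finally show ?thesis by (simp add: psi_def)
  qed
  have "1 \<le> (LINT x|lborel. K * psi u x)"
    unfolding one[symmetric] by (rule integral_mono[OF iV ip pw])
  also have "\<dots> = K * (LINT x|lborel. psi u x)" by simp
  also have "\<dots> \<le> K * (4 * (LINT x|lborel. (norm (g x))\<^sup>2))"
    using hardy[OF tf dim] K by (intro mult_left_mono) auto
  finally have "1 \<le> (4*K) * (LINT x|lborel. (norm (g x))\<^sup>2)" by simp
  then have "1 / (4*K) \<le> (LINT x|lborel. (norm (g x))\<^sup>2)" using K by (simp add: divide_simps mult.commute)
  then show "ereal (1 / (4*K)) \<le> ereal (LINT x|lborel. (norm (g x))\<^sup>2)" by simp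
qed

lemma test_fun_mono:
  assumes tf: "test_fun R u g" and RR: "R \<le> R'" shows "test_fun R' u g"
proof -
  have b: "ball 0 R \<subseteq> ball 0 R'" using RR by (rule subset_ball)
  show ?thesis using tf b unfolding test_fun_def by (meson order.trans)
qed

lemma lambda1_antimono:
  assumes "R \<le> R'" shows "lambda1 V R' \<le> lambda1 V R"
  unfolding lambda1_def
proof (rule Inf_superset_mono)
  show "{ereal (LINT x|lborel. (norm (g x))\<^sup>2) | u g. test_fun R u g \<and> (LINT x|lborel. V x * (u x)\<^sup>2) = 1}
    \<subseteq> {ereal (LINT x|lborel. (norm (g x))\<^sup>2) | u g. test_fun R' u g \<and> (LINT x|lborel. V x * (u x)\<^sup>2) = 1}"
  proof
    fix z assume "z \<in> {ereal (LINT x|lborel. (norm (g x))\<^sup>2) | u g. test_fun R u g \<and> (LINT x|lborel. V x * (u x)\<^sup>2) = 1}"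
    then obtain u g where z: "z = ereal (LINT x|lborel. (norm (g x))\<^sup>2)" and tf: "test_fun R u g"
      and one: "(LINT x|lborel. V x * (u x)\<^sup>2) = 1" by blast
    have "test_fun R' u g" using test_fun_mono[OF tf assms] .
    with z one show "z \<in> {ereal (LINT x|lborel. (norm (g x))\<^sup>2) | u g. test_fun R' u g \<and> (LINT x|lborel. V x * (u x)\<^sup>2) = 1}"
      by blast
  qed
qed

theorem theorem1p1:
  fixes V V1 V2 :: "'a::euclidean_space \<Rightarrow> real"
  assumes dim: "DIM('a) \<ge> 3"
    and holder: "\<exists>C \<beta>. 0 < \<beta> \<and> \<beta> \<le> 1 \<and> (\<forall>x y. \<bar>V x - V y\<bar> \<le> C * dist x y powr \<beta>)"
    and Vmeas: "V \<in> borel_measurable lborel"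
    and Vbdd: "\<exists>M. \<forall>x. \<bar>V x\<bar> \<le> M"
    and split: "\<And>x. max (V x) 0 = V1 x + V2 x"
    and Vpos_nonzero: "\<not> (AE x in lborel. max (V x) 0 = 0)"
    and V1meas: "V1 \<in> borel_measurable lborel"
    and V1int: "integrable lborel (\<lambda>x. \<bar>V1 x\<bar> powr (real DIM('a) / 2))"
    and V2inf: "((\<lambda>x. (norm x)\<^sup>2 * V2 x) \<longlongrightarrow> 0) at_infinity"
    and decay: "\<exists>A \<alpha>. A > 0 \<and> \<alpha> > 0 \<and> (\<forall>x. x \<noteq> 0 \<longrightarrow> max (V x) 0 \<le> A * norm x powr (-2 - \<alpha>))"
    and V2zero: "((\<lambda>x. norm x powr (2 * (real DIM('a) - 1) / real DIM('a)) * V2 x) \<longlongrightarrow> 0) (at 0)"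
  shows "Lambda V > 0"
proof -
  obtain K where K: "K > 0" "\<And>x. max (V x) 0 \<le> K / (x \<bullet> x + 1)"
    using Vbound[OF Vbdd decay] by blast
  define f where "f = lambda1 V"
  define l where "l = Inf (range f)"
  have lim: "(f \<longlongrightarrow> l) at_top"
  proof (rule decreasing_tendsto)
    show "\<forall>\<^sub>F n in at_top. l \<le> f n" unfolding l_def by (intro always_eventually allI Inf_lower rangeI)
    fix y assume "l < y"
    then obtain R0 where "f R0 < y" unfolding l_def by (auto simp: Inf_less_iff)
    then show "\<forall>\<^sub>F n in at_top. f n < y"
      unfolding eventually_at_top_linorder
      by (intro exI[of _ R0]) (metis f_def lambda1_antimono order.strict_trans1)
  qed
  have "Lambda V = l" unfolding Lambda_def f_def[symmetric]
    using lim by (rule tendsto_Lim[rotated]) simp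
  moreover have "ereal (1 / (4*K)) \<le> l" unfolding l_def f_def
    by (rule INF_greatest) (rule lambda1_lower[OF dim K])
  moreover have "(0::ereal) < ereal (1 / (4*K))" using K by simp
  ultimately show ?thesis by (metis order.strict_trans2)
qed

end
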